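(* Fix a round $r$. Let $\mathcal V^r$ be the multiset of all disseminated perturbed adoption vectors in round $r$, $V^r=|\mathcal V^r|$, and for each agent $i$ let $\mathcal V^r_i\subseteq\mathcal V^r$ be the sub-multiset sampled by $i$, $V^r_i=|\mathcal V^r_i|$. Let $\Lambda^r_{i,j}=\frac1{V^r_i}\sum_{\widetilde{\mathbf X}\in\mathcal V^r_i}[\widetilde{\mathbf X}]_j$ and $\Lambda^r_j=\frac1{V^r}\sum_{\widetilde{\mathbf X}\in\mathcal V^r}[\widetilde{\mathbf X}]_j$. Assume the $\frac1{N^3}$-nearly uniform distribution holds in round $r$, i.e., each token independently ends at each given agent with probability in $[\frac1N-\frac1{N^3},\frac1N+\frac1{N^3}]$ (which happens with probability at least $1-N^{-h/3}$). Then for all agents $i$ and options $j$, $$\xi_0\le\frac{\mathbb E\left[\Lambda^r_{i,j}\,\middle|\,V^r_i,\widetilde{\mathcal X}^r\right]}{\Lambda^r_j}\le\xi_1,$$ where $$\xi_0=\left(1-\frac{2}{N^2+1}\right)^{V^r_i}\left(1-\frac{2}{N^3-N^2+1}\right)^{V^r-V^r_i},\qquad \xi_1=\left(1+\frac{2}{N^2-1}\right)^{V^r_i}\left(1+\frac{2}{N^3-N^2-1}\right)^{V^r-V^r_i}.$$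
   Context: Agents $\mathcal N=\{1,\dots,N\}$ form a connected non-bipartite graph. In round $r$, each agent that adopted an option in round $r-1$ has a perturbed adoption vector $\widetilde{\mathbf X}^r_i\in\{0,1\}^M$ (obtained by independently flipping each coordinate of its adoption vector with probability $\frac1{e^{\varepsilon/2}+1}$); $\widetilde{\mathcal X}^r=\{\widetilde{\mathbf X}^r_i\}_i$. Each such agent launches $hg(N)$ independent Metropolis–Hastings random walk tokens carrying its vector (so $\mathcal V^r$ consists of $hg(N)$ copies of each perturbed vector), where $h=16\sigma/(1-\beta)$, $\sigma\ge11$, $\beta\in(1/2,1)$, and $g:\mathbb N^+\to\mathbb R$ satisfies $\ell\ln N<g(N)<\ell N$ for every $\ell>0$ and all sufficiently large $N$. A token is sampled by the agent at which its walk ends. $[\widetilde{\mathbf X}]_j$ denotes the $j$-th coordinate. *)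

theory Defs
  imports "HOL-Probability.Probability"
begin

(* Agents are 1..N.  The adopting agents of round r form a set A \<subseteq> {1..N}.
   Agent k's perturbed adoption vector is Xt k :: nat \<Rightarrow> bool (coordinate j < M).
   Each adopting agent k launches K (= h g(N)) tokens; token (k,c), c < K,
   is the c-th copy carrying Xt k. *)
definition tokens :: "nat set \<Rightarrow> nat \<Rightarrow> (nat \<times> nat) set" where
  "tokens A K = A \<times> {..<K}"

definition endpoint_pmf :: "(nat \<times> nat) set \<Rightarrow> ((nat \<times> nat) \<Rightarrow> nat pmf) \<Rightarrow> ((nat \<times> nat) \<Rightarrow> nat) pmf" where
  "endpoint_pmf T P = Pi_pmf T 0 P"

definition nearly_uniform :: "nat \<Rightarrow> (nat \<times> nat) set \<Rightarrow> ((nat \<times> nat) \<Rightarrow> nat pmf) \<Rightarrow> bool" where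
  "nearly_uniform N T P \<longleftrightarrow>
     (\<forall>t\<in>T. set_pmf (P t) \<subseteq> {1..N} \<and>
        (\<forall>k\<in>{1..N}. 1 / real N - 1 / real N ^ 3 \<le> pmf (P t) k \<and>
                      pmf (P t) k \<le> 1 / real N + 1 / real N ^ 3))"

definition sampled :: "(nat \<times> nat) set \<Rightarrow> ((nat \<times> nat) \<Rightarrow> nat) \<Rightarrow> nat \<Rightarrow> (nat \<times> nat) set" where
  "sampled T w i = {t \<in> T. w t = i}"

definition Lambda_ij :: "(nat \<Rightarrow> nat \<Rightarrow> bool) \<Rightarrow> (nat \<times> nat) set \<Rightarrow> ((nat \<times> nat) \<Rightarrow> nat) \<Rightarrow> nat \<Rightarrow> nat \<Rightarrow> real" where
  "Lambda_ij Xt T w i j =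
     (\<Sum>t\<in>sampled T w i. of_bool (Xt (fst t) j)) / real (card (sampled T w i))"

definition Lambda_j :: "(nat \<Rightarrow> nat \<Rightarrow> bool) \<Rightarrow> (nat \<times> nat) set \<Rightarrow> nat \<Rightarrow> real" where
  "Lambda_j Xt T j = (\<Sum>t\<in>T. of_bool (Xt (fst t) j)) / real (card T)"

definition xi0 :: "nat \<Rightarrow> nat \<Rightarrow> nat \<Rightarrow> real" where
  "xi0 N V Vi = (1 - 2 / (real N ^ 2 + 1)) ^ Vi * (1 - 2 / (real N ^ 3 - real N ^ 2 + 1)) ^ (V - Vi)"

definition xi1 :: "nat \<Rightarrow> nat \<Rightarrow> nat \<Rightarrow> real" where
  "xi1 N V Vi = (1 + 2 / (real N ^ 2 - 1)) ^ Vi * (1 + 2 / (real N ^ 3 - real N ^ 2 - 1)) ^ (V - Vi)"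

end

theory Submission
  imports Defs
begin


lemma count_subsets_with:
  assumes "finite T" "t \<in> T" "v \<ge> 1"
  shows "card {U. U \<subseteq> T \<and> card U = v \<and> t \<in> U} = (card T - 1) choose (v - 1)"
proof -
  have eq: "{U. U \<subseteq> T \<and> card U = v \<and> t \<in> U} = insert t ` {U. U \<subseteq> T - {t} \<and> card U = v - 1}"
  proof (intro equalityI subsetI)
    fix U assume "U \<in> {U. U \<subseteq> T \<and> card U = v \<and> t \<in> U}"
    hence U: "U \<subseteq> T" "card U = v" "t \<in> U" by auto
    have "finite U" using U(1) assms(1) finite_subset by blast
    hence "card (U - {t}) = v - 1" using U by simp
    moreover have "U = insert t (U - {t})" using U by auto
    ultimately show "U \<in> insert t ` {U. U \<subseteq> T - {t} \<and> card U = v - 1}" using U by blast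
  next
    fix U assume "U \<in> insert t ` {U. U \<subseteq> T - {t} \<and> card U = v - 1}"
    then obtain U' where U': "U = insert t U'" "U' \<subseteq> T - {t}" "card U' = v - 1" by auto
    have "finite U'" using U' assms(1) finite_subset by blast
    moreover have "t \<notin> U'" using U' by auto
    ultimately have "card U = v" using U' assms(3) by simp
    thus "U \<in> {U. U \<subseteq> T \<and> card U = v \<and> t \<in> U}" using U' assms(2) by auto
  qed
  have inj: "inj_on (insert t) {U. U \<subseteq> T - {t} \<and> card U = v - 1}"
    by (rule inj_onI) blast
  have "card {U. U \<subseteq> T \<and> card U = v \<and> t \<in> U} = card {U. U \<subseteq> T - {t} \<and> card U = v - 1}"
    unfolding eq by (rule card_image[OF inj])
  also have "\<dots> = card (T - {t}) choose (v - 1)" using assms(1) by (intro n_subsets) simp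
  finally show ?thesis using assms by simp
qed

lemma sum_subsets_swap:
  fixes x :: "'a \<Rightarrow> real"
  assumes "finite T" "v \<ge> 1"
  shows "(\<Sum>U\<in>{U. U \<subseteq> T \<and> card U = v}. \<Sum>t\<in>U. x t) = real ((card T - 1) choose (v - 1)) * (\<Sum>t\<in>T. x t)"
proof -
  let ?C = "{U. U \<subseteq> T \<and> card U = v}"
  have finC: "finite ?C" using assms(1) by simp
  have "(\<Sum>U\<in>?C. \<Sum>t\<in>U. x t) = (\<Sum>U\<in>?C. \<Sum>t\<in>T. if t \<in> U then x t else 0)"
  proof (rule sum.cong[OF refl])
    fix U assume "U \<in> ?C"
    hence "U \<subseteq> T" by auto
    thus "(\<Sum>t\<in>U. x t) = (\<Sum>t\<in>T. if t \<in> U then x t else 0)"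
      using assms(1) by (simp add: sum.If_cases Int_absorb1)
  qed
  also have "\<dots> = (\<Sum>t\<in>T. \<Sum>U\<in>?C. if t \<in> U then x t else 0)" by (rule sum.swap)
  also have "\<dots> = (\<Sum>t\<in>T. x t * real (card {U\<in>?C. t \<in> U}))"
  proof (rule sum.cong[OF refl])
    fix t assume "t \<in> T"
    have "(\<Sum>U\<in>?C. if t \<in> U then x t else 0) = (\<Sum>U\<in>{U\<in>?C. t \<in> U}. x t)"
      using finC by (simp add: sum.If_cases Int_def)
    also have "\<dots> = x t * real (card {U\<in>?C. t \<in> U})" by simp
    finally show "(\<Sum>U\<in>?C. if t \<in> U then x t else 0) = x t * real (card {U\<in>?C. t \<in> U})" .
  qed
  also have "\<dots> = (\<Sum>t\<in>T. x t * real ((card T - 1) choose (v - 1)))"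
  proof (rule sum.cong[OF refl])
    fix t assume t: "t \<in> T"
    have "{U\<in>?C. t \<in> U} = {U. U \<subseteq> T \<and> card U = v \<and> t \<in> U}" by auto
    thus "x t * real (card {U\<in>?C. t \<in> U}) = x t * real ((card T - 1) choose (v - 1))"
      using count_subsets_with[OF assms(1) t assms(2)] by simp
  qed
  also have "\<dots> = real ((card T - 1) choose (v - 1)) * (\<Sum>t\<in>T. x t)"
    by (simp add: sum_distrib_right mult.commute)
  finally show ?thesis .
qed

lemma key_ratio:
  fixes W :: "'a set \<Rightarrow> real" and x :: "'a \<Rightarrow> real"
  assumes finT: "finite T" and v: "v \<ge> 1" and ne: "{U. U \<subseteq> T \<and> card U = v} \<noteq> {}"
    and lo: "0 < lo"
    and W: "\<And>U. U \<subseteq> T \<Longrightarrow> card U = v \<Longrightarrow> lo \<le> W U \<and> W U \<le> hi"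
    and x: "\<And>t. 0 \<le> x t" and X: "0 < (\<Sum>t\<in>T. x t)"
  defines "C \<equiv> {U. U \<subseteq> T \<and> card U = v}"
  defines "E \<equiv> (\<Sum>U\<in>C. ((\<Sum>t\<in>U. x t) / real (card U)) * (W U / (\<Sum>U\<in>C. W U)))"
  shows "lo / hi \<le> E / ((\<Sum>t\<in>T. x t) / real (card T)) \<and> E / ((\<Sum>t\<in>T. x t) / real (card T)) \<le> hi / lo"
proof -
  define X where "X = (\<Sum>t\<in>T. x t)"
  define V where "V = card T"
  define c1 where "c1 = real ((V - 1) choose (v - 1))"
  define c0 where "c0 = real (V choose v)"
  define Z where "Z = (\<Sum>U\<in>C. W U)"
  define num where "num = (\<Sum>U\<in>C. (\<Sum>t\<in>U. x t) * W U) / real v"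
  have finC: "finite C" unfolding C_def using finT by simp
  have cardC: "real (card C) = c0" unfolding C_def c0_def V_def using n_subsets[OF finT] by simp
  have Cne: "C \<noteq> {}" using ne C_def by simp
  have "card C > 0" using Cne finC by (simp add: card_gt_0_iff)
  hence c0pos: "c0 > 0" using cardC by linarith
  have vc: "real v * c0 = real V * c1"
  proof -
    have "v * (V choose v) = V * ((V - 1) choose (v - 1))"
      using v by (intro times_binomial_minus1_eq) simp
    hence "real (v * (V choose v)) = real (V * ((V - 1) choose (v - 1)))" by (simp only:)
    thus ?thesis by (simp only: of_nat_mult c0_def c1_def)
  qed
  have sumS: "(\<Sum>U\<in>C. \<Sum>t\<in>U. x t) = c1 * X"
    unfolding C_def c1_def X_def V_def using sum_subsets_swap[OF finT v] by simp
  have hi: "lo \<le> hi"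
  proof -
    obtain U0 where "U0 \<subseteq> T" "card U0 = v" using ne by blast
    from W[OF this] show ?thesis by linarith
  qed
  have hipos: "hi > 0" using hi lo by linarith
  have E_eq: "E = num / Z"
  proof -
    have "E = (\<Sum>U\<in>C. ((\<Sum>t\<in>U. x t) / real v) * (W U / Z))"
      unfolding E_def Z_def by (intro sum.cong refl) (simp add: C_def)
    also have "\<dots> = (\<Sum>U\<in>C. (\<Sum>t\<in>U. x t) * W U / real v / Z)"
      by (intro sum.cong refl) simp
    also have "\<dots> = (\<Sum>U\<in>C. (\<Sum>t\<in>U. x t) * W U) / real v / Z"
      by (simp only: sum_divide_distrib)
    finally show ?thesis unfolding num_def .
  qed
  have Zlo: "lo * c0 \<le> Z"
  proof -
    have "(\<Sum>U\<in>C. lo) \<le> Z" unfolding Z_def by (intro sum_mono) (auto simp: C_def W)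
    thus ?thesis using cardC by (simp add: mult.commute)
  qed
  have Zhi: "Z \<le> hi * c0"
  proof -
    have "Z \<le> (\<Sum>U\<in>C. hi)" unfolding Z_def by (intro sum_mono) (auto simp: C_def W)
    thus ?thesis using cardC by (simp add: mult.commute)
  qed
  have sx: "\<And>U. 0 \<le> (\<Sum>t\<in>U. x t)" using x by (simp add: sum_nonneg)
  have nlo: "lo * (c1 * X) \<le> num * real v"
  proof -
    have "(\<Sum>U\<in>C. lo * (\<Sum>t\<in>U. x t)) \<le> (\<Sum>U\<in>C. (\<Sum>t\<in>U. x t) * W U)"
      by (intro sum_mono) (auto simp: C_def W sx mult.commute mult_right_mono)
    thus ?thesis using v by (simp add: num_def sumS sum_distrib_left[symmetric])
  qed
  have nhi: "num * real v \<le> hi * (c1 * X)"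
  proof -
    have "(\<Sum>U\<in>C. (\<Sum>t\<in>U. x t) * W U) \<le> (\<Sum>U\<in>C. hi * (\<Sum>t\<in>U. x t))"
      by (intro sum_mono) (auto simp: C_def W sx mult.commute mult_right_mono)
    thus ?thesis using v by (simp add: num_def sumS sum_distrib_left[symmetric])
  qed
  have Xp: "X > 0" using X X_def by simp
  have Vp: "real V > 0"
  proof -
    have "V choose v > 0" using c0pos c0_def by simp
    hence "v \<le> V" by (simp add: zero_less_binomial_iff)
    thus ?thesis using v by simp
  qed
  have Zp: "Z > 0" using Zlo mult_pos_pos[OF lo c0pos] by linarith
  have vp: "real v > 0" using v by simp
  have ratio: "E / (X / real V) = num * real V / (Z * X)"
    using Xp Vp Zp by (simp add: E_eq)
  have c0eq: "c0 = real V * c1 / real v" using vc vp by (simp add: eq_divide_eq mult.commute)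
  have L: "lo / hi \<le> num * real V / (Z * X)"
  proof -
    have "lo * (Z * X) = lo * Z * X" by simp
    also have "\<dots> \<le> lo * (hi * c0) * X"
      using Zhi lo Xp by (intro mult_left_mono mult_right_mono) auto
    also have "\<dots> = hi * (lo * (c1 * X)) * real V / real v" unfolding c0eq by simp
    also have "\<dots> \<le> hi * (num * real v) * real V / real v"
      using nlo hipos Vp vp by (intro divide_right_mono mult_right_mono mult_left_mono) auto
    also have "\<dots> = hi * (num * real V)" using vp by simp
    finally have a: "lo * (Z * X) \<le> hi * (num * real V)" .
    have ZX: "Z * X > 0" using Zp Xp by simp
    have "lo / hi = lo * (Z * X) / (hi * (Z * X))" using ZX using Zp Xp by (simp add: less_imp_neq[symmetric] order.strict_implies_not_eq)
    also have "\<dots> \<le> hi * (num * real V) / (hi * (Z * X))"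
      using a hipos ZX by (intro divide_right_mono) auto
    also have "\<dots> = num * real V / (Z * X)" using hipos by simp
    finally show ?thesis .
  qed
  have H: "num * real V / (Z * X) \<le> hi / lo"
  proof -
    have "lo * (num * real V) = lo * (num * real v) * real V / real v" using vp by simp
    also have "\<dots> \<le> lo * (hi * (c1 * X)) * real V / real v"
      using nhi lo Vp vp by (intro divide_right_mono mult_right_mono mult_left_mono) auto
    also have "\<dots> = hi * (lo * c0) * X" unfolding c0eq by simp
    also have "\<dots> \<le> hi * Z * X" using Zlo hipos Xp by (intro mult_left_mono mult_right_mono) auto
    finally have a: "lo * (num * real V) \<le> hi * (Z * X)" by simp
    have ZX: "Z * X > 0" using Zp Xp by simp
    have "num * real V / (Z * X) = lo * (num * real V) / (lo * (Z * X))" using lo by simp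
    also have "\<dots> \<le> hi * (Z * X) / (lo * (Z * X))"
      using a lo ZX by (intro divide_right_mono) auto
    also have "\<dots> = hi / lo" using ZX using Zp Xp by (simp add: less_imp_neq[symmetric] order.strict_implies_not_eq)
    finally show ?thesis .
  qed
  show ?thesis using L H ratio unfolding X_def V_def by simp
qed


lemma measure_single_support:
  assumes "A \<inter> set_pmf M \<subseteq> {x}" "x \<in> A"
  shows "measure_pmf.prob M A = pmf M x"
proof (cases "x \<in> set_pmf M")
  case True
  hence "A \<inter> set_pmf M = {x}" using assms by auto
  thus ?thesis using measure_Int_set_pmf[of M A] measure_pmf_single[of M x] by simp
next
  case False
  hence "A \<inter> set_pmf M = {}" using assms by auto
  hence "measure_pmf.prob M A = 0" using measure_Int_set_pmf[of M A] by simp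
  thus ?thesis using False by (simp add: set_pmf_iff)
qed

lemma real_facts:
  fixes N :: nat
  assumes "N \<ge> 3"
  defines "a \<equiv> 1 / real N - 1 / real N ^ 3" and "b \<equiv> 1 / real N + 1 / real N ^ 3"
  shows "0 < a" "0 < 1 - b" "a \<le> b"
    "(a / b) = 1 - 2 / (real N ^ 2 + 1)"
    "((1 - b) / (1 - a)) = 1 - 2 / (real N ^ 3 - real N ^ 2 + 1)"
    "(b / a) = 1 + 2 / (real N ^ 2 - 1)"
    "((1 - a) / (1 - b)) = 1 + 2 / (real N ^ 3 - real N ^ 2 - 1)"
proof -
  define n where "n = real N"
  have n3: "n \<ge> 3" using assms(1) n_def by simp
  have n2: "n ^ 2 \<ge> 9" using power_mono[OF n3, of 2] by simp
  have n3': "n ^ 3 \<ge> 3 * n ^ 2" using n3 by (simp add: power3_eq_cube power2_eq_square mult_right_mono)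
  have np: "n > 0" using n3 by simp
  have ea: "a = (n^2 - 1) / n^3" unfolding a_def n_def[symmetric] using np
    by (simp add: field_simps power3_eq_cube power2_eq_square)
  have eb: "b = (n^2 + 1) / n^3" unfolding b_def n_def[symmetric] using np
    by (simp add: field_simps power3_eq_cube power2_eq_square)
  have e1a: "1 - a = (n^3 - n^2 + 1) / n^3" unfolding ea using np by (simp add: field_simps)
  have e1b: "1 - b = (n^3 - n^2 - 1) / n^3" unfolding eb using np by (simp add: field_simps)
  have p3: "n^3 > 0" using np by simp
  have q1: "n^2 - 1 > 0" using n2 by simp
  have q2: "n^3 - n^2 - 1 > 0" using n2 n3' by simp
  have q3: "n^3 - n^2 + 1 > 0" using q2 by simp
  have q4: "n^2 + 1 > 0" using n2 by simp
  show "0 < a" unfolding ea using q1 p3 by simp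
  show "0 < 1 - b" unfolding e1b using q2 p3 by simp
  show "a \<le> b" unfolding ea eb using p3 by (simp add: divide_right_mono)
  have "a / b = (n^2 - 1) / (n^2 + 1)" unfolding ea eb using p3 by simp
  also have "\<dots> = 1 - 2 / (n^2 + 1)" using q4 by (simp add: field_simps)
  finally show "a / b = 1 - 2 / (real N ^ 2 + 1)" unfolding n_def .
  have "(1 - b) / (1 - a) = (n^3 - n^2 - 1) / (n^3 - n^2 + 1)" unfolding e1a e1b using p3 by simp
  also have "\<dots> = 1 - 2 / (n^3 - n^2 + 1)" using q3 by (simp add: field_simps)
  finally show "(1 - b) / (1 - a) = 1 - 2 / (real N ^ 3 - real N ^ 2 + 1)" unfolding n_def .
  have "b / a = (n^2 + 1) / (n^2 - 1)" unfolding ea eb using p3 by simp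
  also have "\<dots> = 1 + 2 / (n^2 - 1)" using q1 by (simp add: field_simps)
  finally show "b / a = 1 + 2 / (real N ^ 2 - 1)" unfolding n_def .
  have "(1 - a) / (1 - b) = (n^3 - n^2 + 1) / (n^3 - n^2 - 1)" unfolding e1a e1b using p3 by simp
  also have "\<dots> = 1 + 2 / (n^3 - n^2 - 1)" using q2 by (simp add: field_simps)
  finally show "(1 - a) / (1 - b) = 1 + 2 / (real N ^ 3 - real N ^ 2 - 1)" unfolding n_def .
qed

theorem lemma7:
  fixes N M K i j v :: nat and A :: "nat set" and Xt :: "nat \<Rightarrow> nat \<Rightarrow> bool"
    and P :: "nat \<times> nat \<Rightarrow> nat pmf"
  assumes "N \<ge> 3"
    and "A \<subseteq> {1..N}"
    and "K \<ge> 1"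
    and "nearly_uniform N (tokens A K) P"
    and "i \<in> {1..N}" and "j < M"
    and "v \<ge> 1"
    and "\<exists>w\<in>set_pmf (endpoint_pmf (tokens A K) P). card (sampled (tokens A K) w i) = v"
    and "Lambda_j Xt (tokens A K) j > 0"
  shows "xi0 N (card (tokens A K)) v
           \<le> measure_pmf.expectation
               (cond_pmf (endpoint_pmf (tokens A K) P) {w. card (sampled (tokens A K) w i) = v})
               (\<lambda>w. Lambda_ij Xt (tokens A K) w i j) / Lambda_j Xt (tokens A K) j
       \<and> measure_pmf.expectation
               (cond_pmf (endpoint_pmf (tokens A K) P) {w. card (sampled (tokens A K) w i) = v})
               (\<lambda>w. Lambda_ij Xt (tokens A K) w i j) / Lambda_j Xt (tokens A K) j
           \<le> xi1 N (card (tokens A K)) v"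
proof -
  define T where "T = tokens A K"
  define D where "D = endpoint_pmf T P"
  define S where "S = (\<lambda>w. sampled T w i)"
  define x where "x = (\<lambda>t::nat\<times>nat. (of_bool (Xt (fst t) j)::real))"
  define p where "p = (\<lambda>t. pmf (P t) i)"
  define a where "a = 1 / real N - 1 / real N ^ 3"
  define b where "b = 1 / real N + 1 / real N ^ 3"
  define Cs where "Cs = {U::(nat\<times>nat) set. card U = v}"
  define Cv where "Cv = {U. U \<subseteq> T \<and> card U = v}"
  define R where "R = map_pmf S D"
  define g where "g = (\<lambda>U. (\<Sum>t\<in>U. x t) / real (card U))"
  define V where "V = card T"
  have finT: "finite T" using assms(2) unfolding T_def tokens_def by (auto intro: finite_subset)
  have finCv: "finite Cv" unfolding Cv_def using finT by simp
  have pb: "\<And>t. t \<in> T \<Longrightarrow> a \<le> p t \<and> p t \<le> b"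
    using assms(4,5) unfolding nearly_uniform_def T_def a_def b_def p_def by blast
  note rf = real_facts[OF assms(1), folded a_def b_def]
  define B where "B = (\<lambda>t. map_pmf (\<lambda>y. y = i) (P t))"
  define Db where "Db = Pi_pmf T False B"
  have i0: "i \<noteq> 0" using assms(5) by simp
  have Db_eq: "Db = map_pmf (\<lambda>h. (\<lambda>y. y = i) \<circ> h) D"
    unfolding Db_def B_def D_def endpoint_pmf_def using i0 by (intro Pi_pmf_map finT) auto
  define setof where "setof = (\<lambda>c::nat\<times>nat\<Rightarrow>bool. {t\<in>T. c t})"
  have R_eq: "R = map_pmf setof Db"
    unfolding R_def Db_eq map_pmf_comp S_def setof_def sampled_def by simp
  have pB: "pmf (B t) c = (if c then p t else 1 - p t)" for t c
  proof (cases c)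
    case True
    have "(\<lambda>y. y = i) -` {True} = {i}" by auto
    thus ?thesis using True unfolding B_def p_def by (simp add: pmf_map measure_pmf_single)
  next
    case False
    have "(\<lambda>y. y = i) -` {False} = UNIV - {i}" by auto
    thus ?thesis using False measure_pmf.prob_compl[of "{i}" "P t"] unfolding B_def p_def
      by (simp add: pmf_map measure_pmf_single)
  qed
  have WU: "pmf R U = (\<Prod>t\<in>U. p t) * (\<Prod>t\<in>T - U. 1 - p t)" if U: "U \<subseteq> T" for U
  proof -
    define bU where "bU = (\<lambda>t. t \<in> U)"
    have sub: "setof -` {U} \<inter> set_pmf Db \<subseteq> {bU}"
    proof
      fix c assume c: "c \<in> setof -` {U} \<inter> set_pmf Db"
      hence out: "\<forall>t. t \<notin> T \<longrightarrow> c t = False"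
        using set_Pi_pmf_subset[OF finT, of False B] unfolding Db_def by auto
      have "{t\<in>T. c t} = U" using c setof_def by auto
      hence "c = bU" unfolding bU_def using out U by (intro ext) blast
      thus "c \<in> {bU}" by simp
    qed
    have mem: "bU \<in> setof -` {U}" using U unfolding setof_def bU_def by auto
    have "pmf R U = measure_pmf.prob Db (setof -` {U})" unfolding R_eq by (simp add: pmf_map)
    also have "\<dots> = pmf Db bU" by (rule measure_single_support[OF sub mem])
    also have "\<dots> = (\<Prod>t\<in>T. pmf (B t) (bU t))"
      unfolding Db_def using U by (subst pmf_Pi[OF finT]) (auto simp: bU_def)
    also have "\<dots> = (\<Prod>t\<in>T. if t \<in> U then p t else 1 - p t)" by (simp add: pB bU_def)
    also have "\<dots> = (\<Prod>t\<in>U. p t) * (\<Prod>t\<in>T - U. 1 - p t)"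
      using finT U by (simp add: prod.If_cases Int_absorb1 Diff_eq)
    finally show ?thesis .
  qed
  have supR: "set_pmf R \<subseteq> {U. U \<subseteq> T}" unfolding R_def S_def sampled_def by auto
  have setE: "{w. card (sampled T w i) = v} = S -` Cs" by (auto simp: S_def Cs_def)
  have ne: "set_pmf D \<inter> S -` Cs \<noteq> {}" using assms(8) unfolding D_def S_def Cs_def T_def by auto
  have neR: "set_pmf R \<inter> Cs \<noteq> {}" using ne unfolding R_def by auto
  have exp_eq: "measure_pmf.expectation (cond_pmf D (S -` Cs)) (\<lambda>w. Lambda_ij Xt T w i j)
      = measure_pmf.expectation (cond_pmf R Cs) g"
  proof -
    have "cond_pmf R Cs = map_pmf S (cond_pmf D (S -` Cs))" unfolding R_def by (rule cond_map_pmf[OF ne])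
    thus ?thesis by (simp add: g_def Lambda_ij_def S_def x_def)
  qed
  have mCs: "measure_pmf.prob R Cs = (\<Sum>U\<in>Cv. pmf R U)"
  proof -
    have "Cs \<inter> set_pmf R = Cv \<inter> set_pmf R" using supR unfolding Cs_def Cv_def by auto
    hence "measure_pmf.prob R Cs = measure_pmf.prob R Cv"
      using measure_Int_set_pmf[of R Cs] measure_Int_set_pmf[of R Cv] by simp
    also have "\<dots> = (\<Sum>U\<in>Cv. pmf R U)" by (rule measure_measure_pmf_finite[OF finCv])
    finally show ?thesis .
  qed
  have ER: "measure_pmf.expectation (cond_pmf R Cs) g = (\<Sum>U\<in>Cv. g U * (pmf R U / (\<Sum>U\<in>Cv. pmf R U)))"
  proof -
    have "measure_pmf.expectation (cond_pmf R Cs) g = (\<Sum>U\<in>Cv. g U * pmf (cond_pmf R Cs) U)"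
    proof (rule integral_measure_pmf_real[OF finCv])
      fix U assume "U \<in> set_pmf (cond_pmf R Cs)"
      thus "U \<in> Cv" using set_cond_pmf[OF neR] supR unfolding Cs_def Cv_def by auto
    qed
    also have "\<dots> = (\<Sum>U\<in>Cv. g U * (pmf R U / (\<Sum>U\<in>Cv. pmf R U)))"
    proof (intro sum.cong refl)
      fix U assume "U \<in> Cv"
      hence "U \<in> Cs" unfolding Cv_def Cs_def by auto
      thus "g U * pmf (cond_pmf R Cs) U = g U * (pmf R U / (\<Sum>U\<in>Cv. pmf R U))"
        by (simp add: pmf_cond[OF neR] mCs)
    qed
    finally show ?thesis .
  qed
  define lo where "lo = a ^ v * (1 - b) ^ (V - v)"
  define hi where "hi = b ^ v * (1 - a) ^ (V - v)"
  have Wb: "lo \<le> pmf R U \<and> pmf R U \<le> hi" if U: "U \<subseteq> T" "card U = v" for U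
  proof -
    have cd: "card (T - U) = V - v" using U finT V_def by (simp add: card_Diff_subset finite_subset)
    have p1: "a ^ v \<le> (\<Prod>t\<in>U. p t)"
      using prod_mono[of U "\<lambda>_. a" p] pb U rf(1) by (auto simp: prod_constant)
    have p2: "(\<Prod>t\<in>U. p t) \<le> b ^ v"
      using prod_mono[of U p "\<lambda>_. b"] pb U rf(1) by (force simp: prod_constant)
    have p3: "(1 - b) ^ (V - v) \<le> (\<Prod>t\<in>T - U. 1 - p t)"
      using prod_mono[of "T - U" "\<lambda>_. 1 - b" "\<lambda>t. 1 - p t"] pb rf(2) cd by (auto simp: prod_constant)
    have p4: "(\<Prod>t\<in>T - U. 1 - p t) \<le> (1 - a) ^ (V - v)"
      using prod_mono[of "T - U" "\<lambda>t. 1 - p t" "\<lambda>_. 1 - a"] pb rf(2) cd by (force simp: prod_constant)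
    have nn1: "0 \<le> a ^ v" using rf(1) by simp
    have nn2: "0 \<le> (1 - b) ^ (V - v)" using rf(2) by simp
    have nn3: "0 \<le> (\<Prod>t\<in>U. p t)" using nn1 p1 by linarith
    have nn4: "0 \<le> (\<Prod>t\<in>T - U. 1 - p t)" using nn2 p3 by linarith
    show ?thesis unfolding WU[OF U(1)] lo_def hi_def
      using mult_mono[OF p1 p3 nn3 nn2] mult_mono[OF p2 p4 _ nn4] rf(1,3) by simp
  qed
  have lop: "0 < lo" unfolding lo_def using rf(1,2) by simp
  have Xpos: "0 < (\<Sum>t\<in>T. x t)"
  proof -
    have "Lambda_j Xt T j = (\<Sum>t\<in>T. x t) / real (card T)" by (simp add: Lambda_j_def x_def)
    moreover have "(\<Sum>t\<in>T. x t) \<ge> 0" by (simp add: x_def sum_nonneg)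
    moreover have "Lambda_j Xt T j > 0" using assms(9) unfolding T_def .
    ultimately show ?thesis by (metis div_0 order_less_le)
  qed
  have neC: "{U. U \<subseteq> T \<and> card U = v} \<noteq> {}" using neR supR unfolding Cs_def by blast
  have KR: "lo / hi \<le> (\<Sum>U\<in>Cv. g U * (pmf R U / (\<Sum>U\<in>Cv. pmf R U))) / ((\<Sum>t\<in>T. x t) / real (card T))
     \<and> (\<Sum>U\<in>Cv. g U * (pmf R U / (\<Sum>U\<in>Cv. pmf R U))) / ((\<Sum>t\<in>T. x t) / real (card T)) \<le> hi / lo"
    unfolding g_def Cv_def
    by (rule key_ratio[OF finT assms(7) neC lop Wb]) (use Xpos in \<open>auto simp: x_def\<close>)
  have LJ: "Lambda_j Xt T j = (\<Sum>t\<in>T. x t) / real (card T)" by (simp add: Lambda_j_def x_def)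
  have x0: "lo / hi = xi0 N V v"
    unfolding lo_def hi_def xi0_def rf(4)[symmetric] rf(5)[symmetric]
    by (simp add: power_divide)
  have x1: "hi / lo = xi1 N V v"
    unfolding lo_def hi_def xi1_def rf(6)[symmetric] rf(7)[symmetric]
    by (simp add: power_divide)
  have main: "xi0 N V v \<le> measure_pmf.expectation (cond_pmf D {w. card (sampled T w i) = v}) (\<lambda>w. Lambda_ij Xt T w i j) / Lambda_j Xt T j
    \<and> measure_pmf.expectation (cond_pmf D {w. card (sampled T w i) = v}) (\<lambda>w. Lambda_ij Xt T w i j) / Lambda_j Xt T j \<le> xi1 N V v"
    unfolding setE exp_eq ER LJ x0[symmetric] x1[symmetric] using KR by simp
  thus ?thesis unfolding D_def V_def T_def .
qed

end
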